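(* Let $p\ge1$, assume $\mathrm{diam}(\mathcal X)\le C_{\mathcal X}$, $\mathrm{diam}(\mathcal Y)\le C_{\mathcal Y}$, and let $C_1,C_2$ satisfy the requirements of the GOSPA1 and GOSPA2 definitions (including, if $p>1$, the condition on $d_{\mathcal Y}$ for GOSPA2). Then for all graphs in $\mathbb G$: (a) $d_{\mathbb G,R_1}(([n],v,e),([n],w,f))=d_{\mathbb G,R_2}(([n],v,e),([n],w,f))$ for graphs of equal size $n$; (b) if $C_1^p\le C_2^p-\frac12C_{\mathcal Y}^p$, then $d_{\mathbb G,R_1}(([m],v,e),([n],w,f))\le d_{\mathbb G,R_2}(([m],v,e),([n],w,f))$; (c) if $C_2^p\le C_1^p-\frac12C_{\mathcal Y}^p$, then $d_{\mathbb G,R_1}(([m],v,e),([n],w,f))\ge d_{\mathbb G,R_2}(([m],v,e),([n],w,f))$; (d) if $C>0$ satisfies $C^p\ge C_i^p$ ($i\in\{1,2\}$), then $d_{\mathbb G,A}(([m],v,e),([n],w,f))\ge d_{\mathbb G,R_i}(([m],v,e),([n],w,f))$, where $d_{\mathbb G,A}$ uses penalty $C$ and the same order $p$.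
   Context: Let $(\mathcal X,d_{\mathcal X})$ and $(\mathcal Y,d_{\mathcal Y})$ be pseudometric spaces (symmetric, satisfying the triangle inequality, $d(z,z)=0$), with a distinguished element $y_0\in\mathcal Y$ meaning "no edge". For $n\in\mathbb N_0$ write $[n]=\{1,\dots,n\}$ ($[0]=\emptyset$) and $S_n$ for the set of permutations of $[n]$. An attributed simple graph is a triple $([n],v,e)$ with $v:[n]\to\mathcal X$ and $e:[n]^2\to\mathcal Y$ symmetric ($e(i,i')=e(i',i)$) with $e(i,i)=y_0$ for all $i$; write $v_i=v(i)$, $e_{ii'}=e(i,i')$. Two graphs $([n],v,e)$, $([n],w,f)$ are regarded as equal if there is $\pi\in S_n$ with $v_i=w_{\pi(i)}$ and $e_{ii'}=f_{\pi(i)\pi(i')}$ for all $i,i'\in[n]$; $\mathbb G$ denotes the set of such graphs. GTT distance: for $p\ge1$, $C>0$ and $([m],v,e),([n],w,f)\in\mathbb G$ with $m\le n$, $$d_{\mathbb G,A}(([m],v,e),([n],w,f))=\min_{I\subset[m],\,\pi\in S_n}\Big[(m+n-2|I|)C^p+\sum_{i\in I}d_{\mathcal X}(v_i,w_{\pi(i)})^p+\tfrac12\sum_{(i,i')\in I^2}d_{\mathcal Y}(e_{ii'},f_{\pi(i)\pi(i')})^p+\tfrac12\sum_{(i,i')\in[m]^2\setminus I^2}d_{\mathcal Y}(e_{ii'},y_0)^p+\tfrac12\sum_{(j,j')\in[n]^2\setminus\pi(I)^2}d_{\mathcal Y}(y_0,f_{jj'})^p\Big]^{1/p},$$ and for $m>n$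 it is defined by swapping the two arguments. GOSPA distances: assume $\mathrm{diam}(\mathcal X)\le C_{\mathcal X}$, $\mathrm{diam}(\mathcal Y)\le C_{\mathcal Y}$, $p\ge1$. For $([m],v,e),([n],w,f)\in\mathbb G$ with $n\ge\max\{m,1\}$ (otherwise swap arguments; both distances are $0$ if $m=n=0$), using the convention $0/0:=0$: GOSPA1 (penalty $C_1^p\ge C_{\mathcal X}^p+\frac12C_{\mathcal Y}^p$): $$d_{\mathbb G,R_1}=\frac{1}{n^{1/p}}\min_{\pi\in S_n}\Big[(n-m)C_1^p+\sum_{i\in[m]}d_{\mathcal X}(v_i,w_{\pi(i)})^p+\frac12\frac1{n-1}\sum_{i\in[m]}\Big(\sum_{i'\in[m]}d_{\mathcal Y}(e_{ii'},f_{\pi(i)\pi(i')})^p+(n-m)C_{\mathcal Y}^p\Big)\Big]^{1/p};$$ GOSPA2 (penalty $C_2^p\ge C_{\mathcal X}^p+C_{\mathcal Y}^p$; for $p>1$ additionally requiring $d_{\mathcal Y}(y_1,y_2)\le\max\{d_{\mathcal Y}(y_1,y_0),d_{\mathcal Y}(y_0,y_2)\}$ for all $y_1,y_2$): $$d_{\mathbb G,R_2}=\frac{1}{n^{1/p}}\min_{\pi\in S_n}\Big[(n-m)C_2^p+\sum_{i\in[m]}d_{\mathcal X}(v_i,w_{\pi(i)})^p+\frac12\frac1{n-1}\Big(\sum_{(i,i')\in[m]^2}d_{\mathcal Y}(e_{ii'},f_{\pi(i)\pi(i')})^p+\sum_{(i,i')\in[n]^2\setminus[m]^2}d_{\mathcal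 Y}(y_0,f_{\pi(i)\pi(i')})^p\Big)\Big]^{1/p}.$$ *)

theory Defs
  imports "HOL-Analysis.Analysis" "HOL-Combinatorics.Permutations"
begin

text \<open>An attributed simple graph ([n],v,e) is represented by its size n, vertex
attributes v (used on {1..n}) and edge attributes e (used on {1..n}^2).
All distances below are invariant under relabelling, so they are stated on
representatives.\<close>

definition pseudometric :: "('a \<Rightarrow> 'a \<Rightarrow> real) \<Rightarrow> bool" where
  "pseudometric d \<longleftrightarrow> (\<forall>x. d x x = 0) \<and> (\<forall>x y. d x y = d y x)
     \<and> (\<forall>x y z. d x z \<le> d x y + d y z)"

definition attr_graph :: "'y \<Rightarrow> nat \<Rightarrow> (nat \<Rightarrow> nat \<Rightarrow> 'y) \<Rightarrow> bool" where
  "attr_graph y0 n e \<longleftrightarrow> (\<forall>i\<in>{1..n}. \<forall>i'\<in>{1..n}. e i i' = e i' i) \<and> (\<forall>i\<in>{1..n}. e i i = y0)"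

definition gtt_core ::
  "('x \<Rightarrow> 'x \<Rightarrow> real) \<Rightarrow> ('y \<Rightarrow> 'y \<Rightarrow> real) \<Rightarrow> 'y \<Rightarrow> real \<Rightarrow> real \<Rightarrow>
   nat \<Rightarrow> (nat \<Rightarrow> 'x) \<Rightarrow> (nat \<Rightarrow> nat \<Rightarrow> 'y) \<Rightarrow> nat \<Rightarrow> (nat \<Rightarrow> 'x) \<Rightarrow> (nat \<Rightarrow> nat \<Rightarrow> 'y) \<Rightarrow> real" where
  "gtt_core dX dY y0 p C m v e n w f =
     (Min ((\<lambda>(I, \<pi>).
        (real m + real n - 2 * real (card I)) * C powr p
        + (\<Sum>i\<in>I. dX (v i) (w (\<pi> i)) powr p)
        + 1/2 * (\<Sum>(i, i')\<in>I \<times> I. dY (e i i') (f (\<pi> i) (\<pi> i')) powr p)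
        + 1/2 * (\<Sum>(i, i')\<in>({1..m} \<times> {1..m}) - (I \<times> I). dY (e i i') y0 powr p)
        + 1/2 * (\<Sum>(j, j')\<in>({1..n} \<times> {1..n}) - ((\<pi> ` I) \<times> (\<pi> ` I)). dY y0 (f j j') powr p))
      ` (Pow {1..m} \<times> {\<pi>. \<pi> permutes {1..n}}))) powr (1 / p)"

definition gtt_dist where
  "gtt_dist dX dY y0 p C m v e n w f =
     (if m \<le> n then gtt_core dX dY y0 p C m v e n w f else gtt_core dX dY y0 p C n w f m v e)"

text \<open>GOSPA1, case n \<ge> max m 1 (and value 0 for m = n = 0). Division by zero
is 0 in Isabelle, matching the convention 0/0 := 0 when n = 1.\<close>
definition gospa1_core ::
  "('x \<Rightarrow> 'x \<Rightarrow> real) \<Rightarrow> ('y \<Rightarrow> 'y \<Rightarrow> real) \<Rightarrow> real \<Rightarrow> real \<Rightarrow> real \<Rightarrow>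
   nat \<Rightarrow> (nat \<Rightarrow> 'x) \<Rightarrow> (nat \<Rightarrow> nat \<Rightarrow> 'y) \<Rightarrow> nat \<Rightarrow> (nat \<Rightarrow> 'x) \<Rightarrow> (nat \<Rightarrow> nat \<Rightarrow> 'y) \<Rightarrow> real" where
  "gospa1_core dX dY p C1 CY m v e n w f =
     (if n = 0 then 0 else
      1 / (real n powr (1 / p)) *
      (Min ((\<lambda>\<pi>.
          (real n - real m) * C1 powr p
          + (\<Sum>i\<in>{1..m}. dX (v i) (w (\<pi> i)) powr p)
          + 1/2 * (1 / (real n - 1)) *
             (\<Sum>i\<in>{1..m}. (\<Sum>i'\<in>{1..m}. dY (e i i') (f (\<pi> i) (\<pi> i')) powr p)
                             + (real n - real m) * CY powr p))
        ` {\<pi>. \<pi> permutes {1..n}})) powr (1 / p))"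

definition gospa1_dist where
  "gospa1_dist dX dY p C1 CY m v e n w f =
     (if m \<le> n then gospa1_core dX dY p C1 CY m v e n w f else gospa1_core dX dY p C1 CY n w f m v e)"

definition gospa2_core ::
  "('x \<Rightarrow> 'x \<Rightarrow> real) \<Rightarrow> ('y \<Rightarrow> 'y \<Rightarrow> real) \<Rightarrow> 'y \<Rightarrow> real \<Rightarrow> real \<Rightarrow>
   nat \<Rightarrow> (nat \<Rightarrow> 'x) \<Rightarrow> (nat \<Rightarrow> nat \<Rightarrow> 'y) \<Rightarrow> nat \<Rightarrow> (nat \<Rightarrow> 'x) \<Rightarrow> (nat \<Rightarrow> nat \<Rightarrow> 'y) \<Rightarrow> real" where
  "gospa2_core dX dY y0 p C2 m v e n w f =
     (if n = 0 then 0 else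
      1 / (real n powr (1 / p)) *
      (Min ((\<lambda>\<pi>.
          (real n - real m) * C2 powr p
          + (\<Sum>i\<in>{1..m}. dX (v i) (w (\<pi> i)) powr p)
          + 1/2 * (1 / (real n - 1)) *
             ((\<Sum>(i, i')\<in>{1..m} \<times> {1..m}. dY (e i i') (f (\<pi> i) (\<pi> i')) powr p)
              + (\<Sum>(i, i')\<in>({1..n} \<times> {1..n}) - ({1..m} \<times> {1..m}). dY y0 (f (\<pi> i) (\<pi> i')) powr p)))
        ` {\<pi>. \<pi> permutes {1..n}})) powr (1 / p))"

definition gospa2_dist where
  "gospa2_dist dX dY y0 p C2 m v e n w f =
     (if m \<le> n then gospa2_core dX dY y0 p C2 m v e n w f else gospa2_core dX dY y0 p C2 n w f m v e)"

end

theory Submission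
  imports Defs
begin


lemma Min_img_mono:
  assumes "finite S" "S \<noteq> {}" "\<And>x. x \<in> S \<Longrightarrow> f x \<le> (g x::real)"
  shows "Min (f ` S) \<le> Min (g ` S)"
proof -
  have "Min (g ` S) \<in> g ` S" using assms by simp
  then obtain x where x: "x \<in> S" "Min (g ` S) = g x" by auto
  have "Min (f ` S) \<le> f x" using assms x by simp
  also have "\<dots> \<le> g x" using assms x by simp
  finally show ?thesis using x by simp
qed

lemma PS_fin: "finite {\<pi>. \<pi> permutes {1..(n::nat)}}"
  by (rule finite_permutations) simp

lemma PS_ne: "{\<pi>. \<pi> permutes {1..(n::nat)}} \<noteq> {}"
  using permutes_id by blast

lemma q_md: assumes "(n::nat) \<ge> 1" "m \<le> n"
  shows "1 / (real n - 1) * real m * (real n - real m) \<le> real n - real m"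
proof (cases "m = n")
  case True then show ?thesis by simp
next
  case False
  show ?thesis
  proof (cases "n = 1")
    case True with False assms have "m = 0" by simp
    then show ?thesis by simp
  next
    case False2: False
    have "real m \<le> real n - 1" using False assms by linarith
    moreover have "real n - 1 > 0" using False2 assms by simp
    ultimately have "1 / (real n - 1) * real m \<le> 1" by (simp add: field_simps)
    moreover have "real n - real m \<ge> 0" using assms by simp
    ultimately show ?thesis using mult_right_mono by fastforce
  qed
qed

lemma q_m: assumes "(n::nat) \<ge> 2" "m \<le> n"
  shows "1 / (real n - 1) * real m \<le> 2"
proof -
  have "real n - 1 > 0" using assms by simp
  moreover have "real m \<le> 2 * (real n - 1)"
  proof -
    have "real m \<le> real n" "real n \<ge> 2" using assms by simp_all
    then show ?thesis by (simp add: algebra_simps)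
  qed
  ultimately show ?thesis by (simp add: field_simps)
qed

lemma q_n: assumes "(n::nat) \<ge> 2"
  shows "1 / (real n - 1) \<le> real n"
proof -
  have "real n - 1 \<ge> 1" using assms by simp
  then have "1 / (real n - 1) \<le> 1" by simp
  then show ?thesis using assms by linarith
qed



lemma b_arith: fixes d q E F X m c1 c2 cy :: real
  assumes "q \<ge> 0" "F \<ge> 0" "q*m*d \<le> d" "cy \<ge> 0" "d \<ge> 0" "c1 \<le> c2 - 1/2*cy"
  shows "d*c1 + X + 1/2*q*(E + m*(d*cy)) \<le> d*c2 + X + 1/2*q*(E+F)"
proof -
  have 1: "q*m*d*cy \<le> d*cy" using mult_right_mono[OF assms(3) assms(4)] .
  have 2: "d*(c1 + 1/2*cy) \<le> d*c2" using mult_left_mono[of "c1 + 1/2*cy" c2 d] assms by simp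
  have 3: "q*F \<ge> 0" using assms by simp
  show ?thesis using 1 2 3 by (simp add: algebra_simps add_divide_distrib)
qed

lemma c_arith: fixes d q E F X m n c1 c2 cy :: real
  assumes "q \<ge> 0" "d \<ge> 0" "cy \<ge> 0" "q*(n-1) \<le> 1" "F \<le> d*(n+m-1)*cy" "c2 \<le> c1 - 1/2*cy"
  shows "d*c2 + X + 1/2*q*(E+F) \<le> d*c1 + X + 1/2*q*(E + m*(d*cy))"
proof -
  have 1: "q*F \<le> q*(d*(n+m-1)*cy)" using mult_left_mono[OF assms(5) assms(1)] .
  have "q*(n-1)*(d*cy) \<le> 1*(d*cy)" using mult_right_mono[OF assms(4)] assms by simp
  then have 2: "q*(d*(n+m-1)*cy) \<le> d*cy + q*m*d*cy" by (simp add: algebra_simps)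
  have 3: "d*(c2 + 1/2*cy) \<le> d*c1" using mult_left_mono[of "c2 + 1/2*cy" c1 d] assms by simp
  show ?thesis using 1 2 3 by (simp add: algebra_simps add_divide_distrib)
qed



lemma d1_arith: fixes n m a :: nat and C C1 CX CY XI XR EI ER Z1 Z2 :: real
  assumes am: "a \<le> m" and mn: "m \<le> n" and n1: "1 \<le> n" and CX: "CX \<ge> 0" and CY: "CY \<ge> 0"
    and C1: "CX + 1/2*CY \<le> C1" and C: "C1 \<le> C" and XI: "XI \<ge> 0" and EI: "EI \<ge> 0"
    and Z1: "Z1 \<ge> 0" and Z2: "Z2 \<ge> 0"
    and XR: "XR \<le> (real m - real a)*CX" and ER: "ER \<le> (real m*real m - real a*real a)*CY"
  shows "(real n - real m)*C1 + (XI + XR) + 1/2*(1/(real n - 1))*((EI + ER) + real m*((real n - real m)*CY))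
     \<le> real n * ((real m + real n - 2*real a)*C + XI + 1/2*EI + 1/2*Z1 + 1/2*Z2)"
proof -
  define k where "k = real m - real a"
  define d where "d = real n - real m"
  define q where "q = 1/(real n - 1)"
  have k0: "k \<ge> 0" and d0: "d \<ge> 0" using am mn by (simp_all add: k_def d_def)
  have C0: "C \<ge> 0" using CX CY C1 C by linarith
  have e: "real m + real n - 2*real a = d + 2*k" by (simp add: k_def d_def)
  have XRk: "XR \<le> k*C" using XR mult_left_mono[of CX C k] k0 C1 C CY by (simp add: k_def)
  have dC: "d*C1 \<le> d*C" using mult_left_mono[OF C d0] .
  have R0: "0 \<le> real n * (1/2*Z1 + 1/2*Z2)" using Z1 Z2 by simp
  show ?thesis
  proof (cases "n = 1")
    case True
    then have q0: "1/(real n - 1) = 0" by simp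
    have "k*C \<ge> 0" using k0 C0 by simp
    then show ?thesis using True q0 dC XRk XI EI Z1 Z2 unfolding e by (simp add: algebra_simps add_divide_distrib d_def)
  next
    case False
    then have n2: "n \<ge> 2" using n1 by simp
    have q0: "q \<ge> 0" using n1 by (simp add: q_def)
    have qn: "q \<le> real n" using q_n[OF n2] by (simp add: q_def)
    have qm: "q * real m \<le> 2" using q_m[OF n2 mn] by (simp add: q_def)
    have qmd: "q * real m * d \<le> d" using q_md[OF n1 mn] by (simp add: q_def d_def)
    have mm: "real m*real m - real a*real a \<le> 2*real m*k"
    proof -
      have "real m*real m - real a*real a = k*(real m + real a)" by (simp add: k_def algebra_simps)
      also have "\<dots> \<le> k*(2*real m)" using mult_left_mono[OF _ k0, of "real m + real a" "2*real m"] am by simp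
      finally show ?thesis by (simp add: algebra_simps)
    qed
    have h2a: "q*ER \<le> q*((real m*real m - real a*real a)*CY)" using mult_left_mono[OF ER q0] .
    have h2b: "(real m*real m - real a*real a)*CY \<le> (2*real m*k)*CY" using mult_right_mono[OF mm CY] .
    have h2c: "q*((2*real m*k)*CY) = 2*k*CY*(q*real m)" by (simp add: algebra_simps)
    have h2d: "2*k*CY*(q*real m) \<le> 2*k*CY*2" using mult_left_mono[OF qm, of "2*k*CY"] k0 CY by simp
    have h2: "q*ER \<le> 4*k*CY" using h2a mult_left_mono[OF h2b q0] h2c h2d by linarith
    have h3: "q*real m*d*CY \<le> d*CY" using mult_right_mono[OF qmd CY] .
    have h4: "q*EI \<le> real n*EI" using mult_right_mono[OF qn EI] .
    have h5: "2*((d+2*k)*C) \<le> real n*((d+2*k)*C)" using mult_right_mono[of 2 "real n" "(d+2*k)*C"] n2 k0 d0 C0 by simp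
    have h6: "XI \<le> real n*XI" using mult_right_mono[of 1 "real n" XI] n1 XI by simp
    have h7a: "d*(C1 + 1/2*CY) \<le> d*(2*C)" using mult_left_mono[OF _ d0, of "C1 + 1/2*CY" "2*C"] C C1 CX by simp
    have h7b: "k*(CX + 2*CY) \<le> k*(4*C)" using mult_left_mono[OF _ k0, of "CX + 2*CY" "4*C"] C C1 CX by simp
    have XRk': "XR \<le> k*CX" using XR by (simp add: k_def)
    have "(real n - real m)*C1 + (XI + XR) + 1/2*(1/(real n - 1))*((EI + ER) + real m*((real n - real m)*CY))
        = d*C1 + XI + XR + 1/2*(q*EI) + 1/2*(q*ER) + 1/2*(q*real m*d*CY)"
      unfolding d_def[symmetric] q_def[symmetric] by (simp add: algebra_simps)
    also have "\<dots> \<le> real n*((d + 2*k)*C) + real n*XI + 1/2*(real n*EI)"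
      using h2 h3 h4 h5 h6 h7a h7b XRk' by (simp add: algebra_simps add_divide_distrib)
    also have "\<dots> \<le> real n * ((real m + real n - 2*real a)*C + XI + 1/2*EI + 1/2*Z1 + 1/2*Z2)"
      using R0 unfolding e by (simp add: algebra_simps)
    finally show ?thesis .
  qed
qed



lemma d2_arith: fixes n m a :: nat and C C2 CX CY XI XR EI ER F Z1 Z2 :: real
  assumes am: "a \<le> m" and mn: "m \<le> n" and n1: "1 \<le> n" and CX: "CX \<ge> 0" and CY: "CY \<ge> 0"
    and C2: "CX + CY \<le> C2" and C: "C2 \<le> C" and XI: "XI \<ge> 0" and EI: "EI \<ge> 0"
    and Z1: "Z1 \<ge> 0" and FZ: "F \<le> Z2" and Z2: "Z2 \<ge> 0" and F0: "F \<ge> 0"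
    and XR: "XR \<le> (real m - real a)*CX" and ER: "ER \<le> (real m*real m - real a*real a)*CY"
  shows "(real n - real m)*C2 + (XI + XR) + 1/2*(1/(real n - 1))*((EI + ER) + F)
     \<le> real n * ((real m + real n - 2*real a)*C + XI + 1/2*EI + 1/2*Z1 + 1/2*Z2)"
proof -
  define k where "k = real m - real a"
  define d where "d = real n - real m"
  define q where "q = 1/(real n - 1)"
  have k0: "k \<ge> 0" and d0: "d \<ge> 0" using am mn by (simp_all add: k_def d_def)
  have C0: "C \<ge> 0" using CX CY C2 C by linarith
  have e: "real m + real n - 2*real a = d + 2*k" by (simp add: k_def d_def)
  have XRk: "XR \<le> k*C" using XR mult_left_mono[of CX C k] k0 C2 C CY by (simp add: k_def)
  have dC: "d*C2 \<le> d*C" using mult_left_mono[OF C d0] .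
  show ?thesis
  proof (cases "n = 1")
    case True
    then have q0: "1/(real n - 1) = 0" by simp
    have "k*C \<ge> 0" using k0 C0 by simp
    then show ?thesis using True q0 dC XRk XI EI Z1 Z2 unfolding e by (simp add: algebra_simps add_divide_distrib d_def)
  next
    case False
    then have n2: "n \<ge> 2" using n1 by simp
    have q0: "q \<ge> 0" using n1 by (simp add: q_def)
    have qn: "q \<le> real n" using q_n[OF n2] by (simp add: q_def)
    have qm: "q * real m \<le> 2" using q_m[OF n2 mn] by (simp add: q_def)
    have mm: "real m*real m - real a*real a \<le> 2*real m*k"
    proof -
      have "real m*real m - real a*real a = k*(real m + real a)" by (simp add: k_def algebra_simps)
      also have "\<dots> \<le> k*(2*real m)" using mult_left_mono[OF _ k0, of "real m + real a" "2*real m"] am by simp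
      finally show ?thesis by (simp add: algebra_simps)
    qed
    have h2a: "q*ER \<le> q*((real m*real m - real a*real a)*CY)" using mult_left_mono[OF ER q0] .
    have h2b: "(real m*real m - real a*real a)*CY \<le> (2*real m*k)*CY" using mult_right_mono[OF mm CY] .
    have h2c: "q*((2*real m*k)*CY) = 2*k*CY*(q*real m)" by (simp add: algebra_simps)
    have h2d: "2*k*CY*(q*real m) \<le> 2*k*CY*2" using mult_left_mono[OF qm, of "2*k*CY"] k0 CY by simp
    have h2: "q*ER \<le> 4*k*CY" using h2a mult_left_mono[OF h2b q0] h2c h2d by linarith
    have h3: "q*F \<le> real n*Z2" using mult_left_mono[OF FZ q0] mult_right_mono[OF qn Z2] by linarith
    have h4: "q*EI \<le> real n*EI" using mult_right_mono[OF qn EI] .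
    have h5: "2*((d+2*k)*C) \<le> real n*((d+2*k)*C)" using mult_right_mono[of 2 "real n" "(d+2*k)*C"] n2 k0 d0 C0 by simp
    have h6: "XI \<le> real n*XI" using mult_right_mono[of 1 "real n" XI] n1 XI by simp
    have h7a: "d*C2 \<le> d*(2*C)" using mult_left_mono[OF _ d0, of "C2" "2*C"] C C2 CX CY by simp
    have h7b: "k*(CX + 2*CY) \<le> k*(4*C)" using mult_left_mono[OF _ k0, of "CX + 2*CY" "4*C"] C C2 CX CY by simp
    have XRk': "XR \<le> k*CX" using XR by (simp add: k_def)
    have R0: "0 \<le> real n * (1/2*Z1)" using Z1 by simp
    have "(real n - real m)*C2 + (XI + XR) + 1/2*(1/(real n - 1))*((EI + ER) + F)
        = d*C2 + XI + XR + 1/2*(q*EI) + 1/2*(q*ER) + 1/2*(q*F)"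
      unfolding d_def[symmetric] q_def[symmetric] by (simp add: algebra_simps)
    also have "\<dots> \<le> real n*((d + 2*k)*C) + real n*XI + 1/2*(real n*EI) + 1/2*(real n*Z2)"
      using h2 h3 h4 h5 h6 h7a h7b XRk' by (simp add: algebra_simps add_divide_distrib)
    also have "\<dots> \<le> real n * ((real m + real n - 2*real a)*C + XI + 1/2*EI + 1/2*Z1 + 1/2*Z2)"
      using R0 unfolding e by (simp add: algebra_simps)
    finally show ?thesis .
  qed
qed



definition T1 where "T1 dX dY p C1 CY m v e n w f = (\<lambda>\<pi>.
          (real n - real m) * C1 powr p
          + (\<Sum>i\<in>{1..m}. dX (v i) (w (\<pi> i)) powr p)
          + 1/2 * (1 / (real n - 1)) *
             (\<Sum>i\<in>{1..m}. (\<Sum>i'\<in>{1..m}. dY (e i i') (f (\<pi> i) (\<pi> i')) powr p)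
                             + (real n - real m) * CY powr p))"

definition T2 where "T2 dX dY y0 p C2 m v e n w f = (\<lambda>\<pi>.
          (real n - real m) * C2 powr p
          + (\<Sum>i\<in>{1..m}. dX (v i) (w (\<pi> i)) powr p)
          + 1/2 * (1 / (real n - 1)) *
             ((\<Sum>(i, i')\<in>{1..m} \<times> {1..m}. dY (e i i') (f (\<pi> i) (\<pi> i')) powr p)
              + (\<Sum>(i, i')\<in>({1..n} \<times> {1..n}) - ({1..m} \<times> {1..m}). dY y0 (f (\<pi> i) (\<pi> i')) powr p)))"

definition TG where "TG dX dY y0 p C m v e n w f I \<pi> =
        (real m + real n - 2 * real (card I)) * C powr p
        + (\<Sum>i\<in>I. dX (v i) (w (\<pi> i)) powr p)
        + 1/2 * (\<Sum>(i, i')\<in>I \<times> I. dY (e i i') (f (\<pi> i) (\<pi> i')) powr p)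
        + 1/2 * (\<Sum>(i, i')\<in>({1..m} \<times> {1..m}) - (I \<times> I). dY (e i i') y0 powr p)
        + 1/2 * (\<Sum>(j, j')\<in>({1..n} \<times> {1..n}) - ((\<pi> ` I) \<times> (\<pi> ` I)). dY y0 (f j j') powr p)"

lemma g1_eq: "gospa1_core dX dY p C1 CY m v e n w f = (if n = 0 then 0 else
   1 / (real n powr (1/p)) * (Min (T1 dX dY p C1 CY m v e n w f ` {\<pi>. \<pi> permutes {1..n}})) powr (1/p))"
  unfolding gospa1_core_def T1_def by (rule refl)

lemma g2_eq: "gospa2_core dX dY y0 p C2 m v e n w f = (if n = 0 then 0 else
   1 / (real n powr (1/p)) * (Min (T2 dX dY y0 p C2 m v e n w f ` {\<pi>. \<pi> permutes {1..n}})) powr (1/p))"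
  unfolding gospa2_core_def T2_def by (rule refl)

lemma gt_eq: "gtt_core dX dY y0 p C m v e n w f =
   (Min ((\<lambda>(I, \<pi>). TG dX dY y0 p C m v e n w f I \<pi>) ` (Pow {1..m} \<times> {\<pi>. \<pi> permutes {1..n}}))) powr (1/p)"
  unfolding gtt_core_def TG_def by (rule refl)



lemma pm_nonneg: "pseudometric d \<Longrightarrow> 0 \<le> d x y"
  unfolding pseudometric_def by (metis mult_2 zero_le_double_add_iff_zero_le_single_add add_le_cancel_left add_0_right)

lemma T1_alt: "T1 dX dY p C1 CY m v e n w f \<pi> = (real n - real m) * C1 powr p
          + (\<Sum>i\<in>{1..m}. dX (v i) (w (\<pi> i)) powr p)
          + 1/2 * (1 / (real n - 1)) *
             ((\<Sum>(i, i')\<in>{1..m} \<times> {1..m}. dY (e i i') (f (\<pi> i) (\<pi> i')) powr p)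
               + real m * ((real n - real m) * CY powr p))"
  unfolding T1_def by (simp add: sum.distrib sum.cartesian_product)

lemma gospa_mono:
  assumes "finite S" "S \<noteq> {}" "\<forall>x\<in>S. 0 \<le> T x" "\<forall>x\<in>S. T x \<le> U x" "p \<ge> (1::real)"
  shows "1/(real n powr (1/p)) * Min (T`S) powr (1/p) \<le> 1/(real n powr (1/p)) * Min (U`S) powr (1/p)"
proof -
  have "0 \<le> Min (T`S)" using assms by simp
  moreover have "Min (T`S) \<le> Min (U`S)" using Min_img_mono[of S T U] assms by blast
  ultimately have "Min (T`S) powr (1/p) \<le> Min (U`S) powr (1/p)" using powr_mono2 assms(5) by simp
  then show ?thesis by (simp add: divide_right_mono)
qed

lemma final_d:
  assumes "p \<ge> (1::real)" "n \<ge> 1" "0 \<le> Mg" "Mg \<le> real n * Mt"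
  shows "1/(real n powr (1/p)) * Mg powr (1/p) \<le> Mt powr (1/p)"
proof -
  have "Mg powr (1/p) \<le> (real n * Mt) powr (1/p)" using powr_mono2 assms by simp
  also have "\<dots> = real n powr (1/p) * Mt powr (1/p)" by (simp add: powr_mult)
  finally have 1: "Mg powr (1/p) \<le> real n powr (1/p) * Mt powr (1/p)" .
  have 2: "real n powr (1/p) > 0" using assms by simp
  show ?thesis using 1 2 by (simp add: field_simps)
qed



lemma part_a: "gospa1_core dX dY p C1 CY n v e n w f = gospa2_core dX dY y0 p C2 n v e n w f"
proof -
  have "T1 dX dY p C1 CY n v e n w f \<pi> = T2 dX dY y0 p C2 n v e n w f \<pi>" for \<pi>
    unfolding T1_alt T2_def by simp
  then show ?thesis unfolding g1_eq g2_eq by simp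
qed

lemma T1_nonneg: assumes pX: "pseudometric dX" and pY: "pseudometric dY" and "m \<le> n" "n \<ge> 1"
  shows "0 \<le> T1 dX dY p C1 CY m v e n w f \<pi>"
proof -
  have a: "0 \<le> (real n - real m) * C1 powr p" using assms by simp
  have b: "0 \<le> (\<Sum>i\<in>{1..m}. dX (v i) (w (\<pi> i)) powr p)" by (simp add: sum_nonneg)
  have c: "0 \<le> (\<Sum>(i, i')\<in>{1..m} \<times> {1..m}. dY (e i i') (f (\<pi> i) (\<pi> i')) powr p)
               + real m * ((real n - real m) * CY powr p)" using assms by (simp add: sum_nonneg case_prod_beta)
  have q: "0 \<le> 1/2 * (1 / (real n - 1))" using assms by simp
  show ?thesis unfolding T1_alt using a b mult_nonneg_nonneg[OF q c] by linarith
qed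

lemma T2_nonneg: assumes pX: "pseudometric dX" and pY: "pseudometric dY" and "m \<le> n" "n \<ge> 1"
  shows "0 \<le> T2 dX dY y0 p C2 m v e n w f \<pi>"
proof -
  have a: "0 \<le> (real n - real m) * C2 powr p" using assms by simp
  have b: "0 \<le> (\<Sum>i\<in>{1..m}. dX (v i) (w (\<pi> i)) powr p)" by (simp add: sum_nonneg)
  have c: "0 \<le> (\<Sum>(i, i')\<in>{1..m} \<times> {1..m}. dY (e i i') (f (\<pi> i) (\<pi> i')) powr p)
              + (\<Sum>(i, i')\<in>({1..n} \<times> {1..n}) - ({1..m} \<times> {1..m}). dY y0 (f (\<pi> i) (\<pi> i')) powr p)"
     by (simp add: sum_nonneg case_prod_beta)
  have q: "0 \<le> 1/2 * (1 / (real n - 1))" using assms by simp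
  show ?thesis unfolding T2_def using a b mult_nonneg_nonneg[OF q c] by linarith
qed

lemma part_b_core:
  assumes pX: "pseudometric dX" and pY: "pseudometric dY" and p1: "p \<ge> 1" and mn: "m \<le> n"
    and CY0: "CY \<ge> 0" and h: "C1 powr p \<le> C2 powr p - 1/2 * CY powr p"
  shows "gospa1_core dX dY p C1 CY m v e n w f \<le> gospa2_core dX dY y0 p C2 m v e n w f"
proof (cases "n = 0")
  case True then show ?thesis unfolding g1_eq g2_eq by simp
next
  case False
  then have n1: "n \<ge> 1" by simp
  have pw: "T1 dX dY p C1 CY m v e n w f \<pi> \<le> T2 dX dY y0 p C2 m v e n w f \<pi>" for \<pi>
    unfolding T1_alt T2_def
  proof (rule b_arith)
    show "0 \<le> 1 / (real n - 1)" using n1 by simp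
    show "0 \<le> (\<Sum>(i, i')\<in>{1..n} \<times> {1..n} - {1..m} \<times> {1..m}. dY y0 (f (\<pi> i) (\<pi> i')) powr p)"
      by (simp add: sum_nonneg case_prod_beta)
    show "1 / (real n - 1) * real m * (real n - real m) \<le> real n - real m" using q_md[OF n1 mn] .
  qed (use mn h in auto)
  have "1/(real n powr (1/p)) * Min (T1 dX dY p C1 CY m v e n w f ` {\<pi>. \<pi> permutes {1..n}}) powr (1/p)
     \<le> 1/(real n powr (1/p)) * Min (T2 dX dY y0 p C2 m v e n w f ` {\<pi>. \<pi> permutes {1..n}}) powr (1/p)"
    by (rule gospa_mono[OF PS_fin PS_ne]) (use T1_nonneg[OF pX pY mn n1] pw p1 in auto)
  then show ?thesis unfolding g1_eq g2_eq using False by simp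
qed



lemma card_diff_real: "finite A \<Longrightarrow> B \<subseteq> A \<Longrightarrow> real (card (A - B)) = real (card A) - real (card B)"
  by (simp add: card_Diff_subset of_nat_diff card_mono finite_subset)

lemma F_bound:
  assumes pY: "pseudometric dY" and p1: "p \<ge> 1" and dY: "\<forall>a b. dY a b \<le> CY"
    and g: "attr_graph y0 n f" and pi: "\<pi> permutes {1..n}" and mn: "m \<le> n"
  shows "(\<Sum>(i, i')\<in>({1..n} \<times> {1..n}) - ({1..m} \<times> {1..m}). dY y0 (f (\<pi> i) (\<pi> i')) powr p)
     \<le> (real n - real m) * (real n + real m - 1) * CY powr p"
proof -
  define A where "A = ({1..n} \<times> {1..n}) - ({1..m} \<times> {1..m})"
  define Dg where "Dg = (\<lambda>i. (i,i)) ` {m+1..n}"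
  define g where "g = (\<lambda>(i, i'). dY y0 (f (\<pi> i) (\<pi> i')) powr p)"
  have fA: "finite A" by (simp add: A_def)
  have DA: "Dg \<subseteq> A" using mn by (auto simp: A_def Dg_def)
  have "sum g A = sum g (A - Dg) + sum g Dg" using sum.subset_diff[OF DA fA] .
  moreover have "sum g Dg = 0"
  proof (rule sum.neutral, clarify)
    fix i j assume "(i, j) \<in> Dg"
    then have ij: "j = i" "i \<in> {1..n}" using mn by (auto simp: Dg_def)
    then have "\<pi> i \<in> {1..n}" using pi by (metis permutes_in_image)
    then have "f (\<pi> i) (\<pi> i) = y0" using g by (simp add: attr_graph_def)
    moreover have "dY y0 y0 = 0" using pY by (simp add: pseudometric_def)
    ultimately show "g (i, j) = 0" using ij by (simp add: g_def)
  qed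
  moreover have "sum g (A - Dg) \<le> real (card (A - Dg)) * CY powr p"
  proof (rule sum_bounded_above)
    fix x assume "x \<in> A - Dg"
    show "g x \<le> CY powr p" unfolding g_def case_prod_beta
      by (rule powr_mono2) (use p1 dY pm_nonneg[OF pY] in auto)
  qed
  moreover have "real (card (A - Dg)) = (real n - real m) * (real n + real m - 1)"
  proof -
    have c1: "real (card A) = real n * real n - real m * real m"
      unfolding A_def using mn by (subst card_diff_real) auto
    have "inj_on (\<lambda>i. (i,i)) {m+1..n}" by (simp add: inj_on_def)
    then have c2: "real (card Dg) = real n - real m" using mn by (simp add: Dg_def card_image)
    show ?thesis using card_diff_real[OF fA DA] c1 c2 by (simp add: algebra_simps)
  qed
  ultimately show ?thesis by (simp add: A_def g_def)
qed

lemma part_c_core: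
  assumes pX: "pseudometric dX" and pY: "pseudometric dY" and p1: "p \<ge> 1" and mn: "m \<le> n"
    and dY: "\<forall>a b. dY a b \<le> CY" and g: "attr_graph y0 n f"
    and CY0: "CY \<ge> 0" and h: "C2 powr p \<le> C1 powr p - 1/2 * CY powr p"
  shows "gospa2_core dX dY y0 p C2 m v e n w f \<le> gospa1_core dX dY p C1 CY m v e n w f"
proof (cases "n = 0")
  case True then show ?thesis unfolding g1_eq g2_eq by simp
next
  case False
  then have n1: "n \<ge> 1" by simp
  have pw: "T2 dX dY y0 p C2 m v e n w f \<pi> \<le> T1 dX dY p C1 CY m v e n w f \<pi>" if pi: "\<pi> permutes {1..n}" for \<pi>
    unfolding T1_alt T2_def
  proof (rule c_arith)
    show "0 \<le> 1 / (real n - 1)" using n1 by simp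
    show "1 / (real n - 1) * (real n - 1) \<le> 1" by (cases "n = 1") auto
    show "(\<Sum>(i, i')\<in>{1..n} \<times> {1..n} - {1..m} \<times> {1..m}. dY y0 (f (\<pi> i) (\<pi> i')) powr p)
        \<le> (real n - real m) * (real n + real m - 1) * CY powr p" by (rule F_bound[OF pY p1 dY g pi mn])
  qed (use mn h in auto)
  have "1/(real n powr (1/p)) * Min (T2 dX dY y0 p C2 m v e n w f ` {\<pi>. \<pi> permutes {1..n}}) powr (1/p)
     \<le> 1/(real n powr (1/p)) * Min (T1 dX dY p C1 CY m v e n w f ` {\<pi>. \<pi> permutes {1..n}}) powr (1/p)"
    by (rule gospa_mono[OF PS_fin PS_ne]) (use T2_nonneg[OF pX pY mn n1] pw p1 in auto)
  then show ?thesis unfolding g1_eq g2_eq using False by simp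
qed



lemma Min_trans:
  assumes "finite S" "finite Q" "Q \<noteq> {}" "\<And>z. z \<in> Q \<Longrightarrow> h z \<in> S \<and> T (h z) \<le> c * (G z::real)"
  shows "Min (T`S) \<le> c * Min (G`Q)"
proof -
  have "Min (G ` Q) \<in> G ` Q" using assms by simp
  then obtain z where z: "z \<in> Q" "Min (G ` Q) = G z" by auto
  have "Min (T`S) \<le> T (h z)" using assms z by simp
  also have "\<dots> \<le> c * G z" using assms z by simp
  finally show ?thesis using z by simp
qed

lemma XR_bound:
  assumes pX: "pseudometric dX" and p1: "p \<ge> 1" and dX: "\<forall>a b. dX a b \<le> CX" and I: "I \<subseteq> {1..m}"
  shows "(\<Sum>i\<in>{1..m}-I. dX (v i) (w (\<pi> i)) powr p) \<le> (real m - real (card I)) * CX powr p"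
proof -
  have "(\<Sum>i\<in>{1..m}-I. dX (v i) (w (\<pi> i)) powr p) \<le> real (card ({1..m}-I)) * CX powr p"
    by (rule sum_bounded_above, rule powr_mono2) (use p1 dX pm_nonneg[OF pX] in auto)
  also have "real (card ({1..m}-I)) = real m - real (card I)" using card_diff_real[of "{1..m}" I] I by simp
  finally show ?thesis .
qed

lemma ER_bound:
  assumes pY: "pseudometric dY" and p1: "p \<ge> 1" and dY: "\<forall>a b. dY a b \<le> CY" and I: "I \<subseteq> {1..m}"
  shows "(\<Sum>(i, i')\<in>{1..m}\<times>{1..m} - I\<times>I. dY (e i i') (f (\<pi> i) (\<pi> i')) powr p)
     \<le> (real m * real m - real (card I) * real (card I)) * CY powr p"
proof -
  have "(\<Sum>(i, i')\<in>{1..m}\<times>{1..m} - I\<times>I. dY (e i i') (f (\<pi> i) (\<pi> i')) powr p)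
     \<le> real (card ({1..m}\<times>{1..m} - I\<times>I)) * CY powr p"
    by (rule sum_bounded_above) (use p1 in \<open>auto simp: case_prod_beta intro!: powr_mono2 simp: dY pm_nonneg[OF pY]\<close>)
  also have "real (card ({1..m}\<times>{1..m} - I\<times>I)) = real m * real m - real (card I) * real (card I)"
    using card_diff_real[of "{1..m}\<times>{1..m}" "I\<times>I"] I by (auto simp: card_cartesian_product)
  finally show ?thesis .
qed

lemma F_le_Z:
  fixes n m :: nat
  assumes pY: "pseudometric dY" and pi: "\<pi> permutes {1..n}" and mn: "m \<le> n" and I: "I \<subseteq> {1..m}"
  shows "(\<Sum>(i, i')\<in>({1..n} \<times> {1..n}) - ({1..m} \<times> {1..m}). dY y0 (f (\<pi> i) (\<pi> i')) powr p)
     \<le> (\<Sum>(j, j')\<in>({1..n} \<times> {1..n}) - ((\<pi> ` I) \<times> (\<pi> ` I)). dY y0 (f j j') powr p)"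
proof -
  define h where "h = map_prod \<pi> \<pi>"
  define G where "G = (\<lambda>(j, j'). dY y0 (f j j') powr p)"
  have inj: "inj h" using permutes_inj[OF pi] unfolding h_def inj_def by auto
  have im: "h ` ({1..n} \<times> {1..n}) = {1..n} \<times> {1..n}"
    using permutes_image[OF pi] by (simp add: h_def map_prod_surj_on)
  have im2: "h ` ({1..m} \<times> {1..m}) = (\<pi> ` {1..m}) \<times> (\<pi> ` {1..m})"
    by (simp add: h_def map_prod_surj_on)
  have "(\<Sum>(i, i')\<in>({1..n} \<times> {1..n}) - ({1..m} \<times> {1..m}). dY y0 (f (\<pi> i) (\<pi> i')) powr p)
      = sum (G \<circ> h) (({1..n} \<times> {1..n}) - ({1..m} \<times> {1..m}))"
    by (rule sum.cong) (auto simp: G_def h_def)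
  also have "\<dots> = sum G (h ` (({1..n} \<times> {1..n}) - ({1..m} \<times> {1..m})))"
    by (rule sum.reindex[symmetric]) (use inj in \<open>metis inj_on_subset subset_UNIV\<close>)
  also have "h ` (({1..n} \<times> {1..n}) - ({1..m} \<times> {1..m})) = {1..n} \<times> {1..n} - (\<pi> ` {1..m}) \<times> (\<pi> ` {1..m})"
    using image_set_diff[OF inj] im im2 by simp
  also have "sum G \<dots> \<le> sum G ({1..n} \<times> {1..n} - (\<pi> ` I) \<times> (\<pi> ` I))"
    by (rule sum_mono2) (use I in \<open>auto simp: G_def\<close>)
  finally show ?thesis by (simp add: G_def)
qed



lemma split_X: "I \<subseteq> {1..m::nat} \<Longrightarrow> (\<Sum>i\<in>{1..m}. g i) = (\<Sum>i\<in>I. g i) + (\<Sum>i\<in>{1..m}-I. g i)"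
  using sum.subset_diff[of I "{1..m}" g] by (simp add: add.commute)

lemma split_E: "I \<subseteq> {1..m::nat} \<Longrightarrow> (\<Sum>(i,i')\<in>{1..m}\<times>{1..m}. g i i') =
   (\<Sum>(i,i')\<in>I\<times>I. g i i') + (\<Sum>(i,i')\<in>{1..m}\<times>{1..m}-I\<times>I. g i i')"
proof -
  assume I: "I \<subseteq> {1..m}"
  have s: "I\<times>I \<subseteq> {1..m}\<times>{1..m}" using I by auto
  have f: "finite ({1..m}\<times>{1..m})" by simp
  have "(\<Sum>(i,i')\<in>{1..m}\<times>{1..m}. g i i') = (\<Sum>(i,i')\<in>{1..m}\<times>{1..m}-I\<times>I. g i i') + (\<Sum>(i,i')\<in>I\<times>I. g i i')"
    by (rule sum.subset_diff[OF s f])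
  then show ?thesis by (simp only: add.commute)
qed

lemma part_d1_core:
  assumes pX: "pseudometric dX" and pY: "pseudometric dY" and p1: "p \<ge> 1" and mn: "m \<le> n"
    and dX: "\<forall>a b. dX a b \<le> CX" and dY: "\<forall>a b. dY a b \<le> CY"
    and C1h: "C1 powr p \<ge> CX powr p + 1/2 * CY powr p" and Ch: "C powr p \<ge> C1 powr p"
  shows "gospa1_core dX dY p C1 CY m v e n w f \<le> gtt_core dX dY y0 p C m v e n w f"
proof (cases "n = 0")
  case True then show ?thesis unfolding g1_eq gt_eq by simp
next
  case False
  then have n1: "n \<ge> 1" by simp
  have pw: "T1 dX dY p C1 CY m v e n w f \<pi> \<le> real n * TG dX dY y0 p C m v e n w f I \<pi>"
    if I: "I \<subseteq> {1..m}" and pi: "\<pi> permutes {1..n}" for I \<pi>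
    unfolding T1_alt TG_def split_X[OF I] split_E[OF I]
  proof (rule d1_arith)
    show "card I \<le> m" using card_mono[OF _ I] by simp
    show "(\<Sum>i\<in>{1..m}-I. dX (v i) (w (\<pi> i)) powr p) \<le> (real m - real (card I)) * CX powr p"
      by (rule XR_bound[OF pX p1 dX I])
    show "(\<Sum>(i, i')\<in>{1..m}\<times>{1..m} - I\<times>I. dY (e i i') (f (\<pi> i) (\<pi> i')) powr p)
     \<le> (real m * real m - real (card I) * real (card I)) * CY powr p"
      by (rule ER_bound[OF pY p1 dY I])
  qed (use mn n1 C1h Ch in \<open>auto simp: sum_nonneg case_prod_beta\<close>)
  have M: "Min (T1 dX dY p C1 CY m v e n w f ` {\<pi>. \<pi> permutes {1..n}})
      \<le> real n * Min ((\<lambda>(I, \<pi>). TG dX dY y0 p C m v e n w f I \<pi>) ` (Pow {1..m} \<times> {\<pi>. \<pi> permutes {1..n}}))"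
    by (rule Min_trans[where h = snd]) (use PS_fin PS_ne pw in auto)
  have M0: "0 \<le> Min (T1 dX dY p C1 CY m v e n w f ` {\<pi>. \<pi> permutes {1..n}})"
    using T1_nonneg[OF pX pY mn n1] PS_fin PS_ne by (subst Min_ge_iff) auto
  show ?thesis unfolding g1_eq gt_eq using False final_d[OF p1 n1 M0 M] by simp
qed

lemma part_d2_core:
  assumes pX: "pseudometric dX" and pY: "pseudometric dY" and p1: "p \<ge> 1" and mn: "m \<le> n"
    and dX: "\<forall>a b. dX a b \<le> CX" and dY: "\<forall>a b. dY a b \<le> CY"
    and C2h: "C2 powr p \<ge> CX powr p + CY powr p" and Ch: "C powr p \<ge> C2 powr p"
  shows "gospa2_core dX dY y0 p C2 m v e n w f \<le> gtt_core dX dY y0 p C m v e n w f"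
proof (cases "n = 0")
  case True then show ?thesis unfolding g2_eq gt_eq by simp
next
  case False
  then have n1: "n \<ge> 1" by simp
  have pw: "T2 dX dY y0 p C2 m v e n w f \<pi> \<le> real n * TG dX dY y0 p C m v e n w f I \<pi>"
    if I: "I \<subseteq> {1..m}" and pi: "\<pi> permutes {1..n}" for I \<pi>
    unfolding T2_def TG_def split_X[OF I] split_E[OF I]
  proof (rule d2_arith)
    show "card I \<le> m" using card_mono[OF _ I] by simp
    show "(\<Sum>i\<in>{1..m}-I. dX (v i) (w (\<pi> i)) powr p) \<le> (real m - real (card I)) * CX powr p"
      by (rule XR_bound[OF pX p1 dX I])
    show "(\<Sum>(i, i')\<in>{1..m}\<times>{1..m} - I\<times>I. dY (e i i') (f (\<pi> i) (\<pi> i')) powr p)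
     \<le> (real m * real m - real (card I) * real (card I)) * CY powr p"
      by (rule ER_bound[OF pY p1 dY I])
    show "(\<Sum>(i, i')\<in>({1..n} \<times> {1..n}) - ({1..m} \<times> {1..m}). dY y0 (f (\<pi> i) (\<pi> i')) powr p)
     \<le> (\<Sum>(j, j')\<in>({1..n} \<times> {1..n}) - ((\<pi> ` I) \<times> (\<pi> ` I)). dY y0 (f j j') powr p)"
      by (rule F_le_Z[OF pY pi mn I])
  qed (use mn n1 C2h Ch in \<open>auto simp: sum_nonneg case_prod_beta\<close>)
  have M: "Min (T2 dX dY y0 p C2 m v e n w f ` {\<pi>. \<pi> permutes {1..n}})
      \<le> real n * Min ((\<lambda>(I, \<pi>). TG dX dY y0 p C m v e n w f I \<pi>) ` (Pow {1..m} \<times> {\<pi>. \<pi> permutes {1..n}}))"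
    by (rule Min_trans[where h = snd]) (use PS_fin PS_ne pw in auto)
  have M0: "0 \<le> Min (T2 dX dY y0 p C2 m v e n w f ` {\<pi>. \<pi> permutes {1..n}})"
    using T2_nonneg[OF pX pY mn n1] PS_fin PS_ne by (subst Min_ge_iff) auto
  show ?thesis unfolding g2_eq gt_eq using False final_d[OF p1 n1 M0 M] by simp
qed

theorem mainTheorem8:
  fixes dX :: "'x \<Rightarrow> 'x \<Rightarrow> real" and dY :: "'y \<Rightarrow> 'y \<Rightarrow> real" and y0 :: 'y
    and p CX CY C1 C2 :: real
  assumes pX: "pseudometric dX" and pY: "pseudometric dY"
    and p1: "p \<ge> 1"
    and diamX: "\<forall>a b. dX a b \<le> CX" and diamY: "\<forall>a b. dY a b \<le> CY"
    and C1nn: "C1 \<ge> 0" and C2nn: "C2 \<ge> 0"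
    and C1: "C1 powr p \<ge> CX powr p + 1/2 * CY powr p"
    and C2: "C2 powr p \<ge> CX powr p + CY powr p"
    and ultra: "p > 1 \<longrightarrow> (\<forall>y1 y2. dY y1 y2 \<le> max (dY y1 y0) (dY y0 y2))"
  shows
    "(\<forall>n v e w f. attr_graph y0 n e \<and> attr_graph y0 n f \<longrightarrow>
        gospa1_dist dX dY p C1 CY n v e n w f = gospa2_dist dX dY y0 p C2 n v e n w f)
   \<and> (C1 powr p \<le> C2 powr p - 1/2 * CY powr p \<longrightarrow>
       (\<forall>m v e n w f. attr_graph y0 m e \<and> attr_graph y0 n f \<longrightarrow>
        gospa1_dist dX dY p C1 CY m v e n w f \<le> gospa2_dist dX dY y0 p C2 m v e n w f))
   \<and> (C2 powr p \<le> C1 powr p - 1/2 * CY powr p \<longrightarrow>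
       (\<forall>m v e n w f. attr_graph y0 m e \<and> attr_graph y0 n f \<longrightarrow>
        gospa1_dist dX dY p C1 CY m v e n w f \<ge> gospa2_dist dX dY y0 p C2 m v e n w f))
   \<and> (\<forall>C. C > 0 \<and> C powr p \<ge> C1 powr p \<longrightarrow>
       (\<forall>m v e n w f. attr_graph y0 m e \<and> attr_graph y0 n f \<longrightarrow>
        gtt_dist dX dY y0 p C m v e n w f \<ge> gospa1_dist dX dY p C1 CY m v e n w f))
   \<and> (\<forall>C. C > 0 \<and> C powr p \<ge> C2 powr p \<longrightarrow>
       (\<forall>m v e n w f. attr_graph y0 m e \<and> attr_graph y0 n f \<longrightarrow>
        gtt_dist dX dY y0 p C m v e n w f \<ge> gospa2_dist dX dY y0 p C2 m v e n w f))"
  proof -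
  have CY0: "CY \<ge> 0" using diamY pm_nonneg[OF pY, of y0 y0] by (metis order_trans)
  have A: "\<forall>n v e w f. attr_graph y0 n e \<and> attr_graph y0 n f \<longrightarrow>
        gospa1_dist dX dY p C1 CY n v e n w f = gospa2_dist dX dY y0 p C2 n v e n w f"
    by (simp add: gospa1_dist_def gospa2_dist_def part_a)
  have B: "C1 powr p \<le> C2 powr p - 1/2 * CY powr p \<longrightarrow>
       (\<forall>m v e n w f. attr_graph y0 m e \<and> attr_graph y0 n f \<longrightarrow>
        gospa1_dist dX dY p C1 CY m v e n w f \<le> gospa2_dist dX dY y0 p C2 m v e n w f)"
    using part_b_core[OF pX pY p1 _ CY0] by (auto simp: gospa1_dist_def gospa2_dist_def)
  have C: "C2 powr p \<le> C1 powr p - 1/2 * CY powr p \<longrightarrow>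
       (\<forall>m v e n w f. attr_graph y0 m e \<and> attr_graph y0 n f \<longrightarrow>
        gospa1_dist dX dY p C1 CY m v e n w f \<ge> gospa2_dist dX dY y0 p C2 m v e n w f)"
    using part_c_core[OF pX pY p1 _ diamY _ CY0] by (auto simp: gospa1_dist_def gospa2_dist_def)
  have D1: "\<forall>C. C > 0 \<and> C powr p \<ge> C1 powr p \<longrightarrow>
       (\<forall>m v e n w f. attr_graph y0 m e \<and> attr_graph y0 n f \<longrightarrow>
        gtt_dist dX dY y0 p C m v e n w f \<ge> gospa1_dist dX dY p C1 CY m v e n w f)"
    using part_d1_core[OF pX pY p1 _ diamX diamY C1] by (auto simp: gospa1_dist_def gtt_dist_def)
  have D2: "\<forall>C. C > 0 \<and> C powr p \<ge> C2 powr p \<longrightarrow>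
       (\<forall>m v e n w f. attr_graph y0 m e \<and> attr_graph y0 n f \<longrightarrow>
        gtt_dist dX dY y0 p C m v e n w f \<ge> gospa2_dist dX dY y0 p C2 m v e n w f)"
    using part_d2_core[OF pX pY p1 _ diamX diamY C2] by (auto simp: gospa2_dist_def gtt_dist_def)
  show ?thesis using A B C D1 D2 by blast
qed

end
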